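(* Assume the model and the bounded-SNR assumption in the context, and fix $\varepsilon>0$. For a profile $\mathbf a$ and a player $n$ with $a_n\notin B_\varepsilon(\mathbf a_{-n})$, let $k$ be uniformly distributed on $B_{\varepsilon/2}(\mathbf a_{-n})$, let $\mathbf a'=(k,\mathbf a_{-n})$, and define $$\Delta_1=R_n(\mathbf a')-R_n(\mathbf a),\qquad \Delta_2=\sum_{m\ne n:\ a_m=k}\big(R_m(\mathbf a')-R_m(\mathbf a)\big).$$ Then the probability (over the random locations) that for every profile $\mathbf a$ and every player $n$ with $a_n\notin B_\varepsilon(\mathbf a_{-n})$ one has $\mathbb E_k[\Delta_1+\Delta_2]>0$ (expectation over the uniform choice of $k$) tends to $1$ as $N\to\infty$.
   Context: Model. Fix constants $\lambda>0$, $\alpha>0$, $G>0$, $\theta_T,\theta_R\in(0,2\pi]$, $P_0>0$, $N_0>0$ and a positive integer $S$. For each $N\ge2$ there are $N$ players $\mathcal N=\{1,\dots,N\}$ and a destination map $d:\mathcal N\to\mathcal N$, fixed independently of the player locations, with $d(n)\ne n$ for all $n$ and with every player being the destination of at most $S$ players. The number of channels is $K=N/l_N$ (an integer), where $l_N\ge1$ and $l_N\left(\frac{\log N}{N}\right)^{\frac{\alpha}{\alpha+2}}\to0$ as $N\to\infty$. The locations $x_1,\dots,x_N$ of the players are i.i.d. uniform on a fixed closed set $\mathcal D\subseteq\mathbb R^2$ of area $1/\lambda$. Each player has a transmit beam of angular width $\theta_T$ and a receive beam of angular width $\theta_R$, with fixed arbitrary orientations. For $i\ne j$, $r_{i,j}=\|x_i-x_j\|$;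 $\theta_{i,j}$ denotes the angle between the direction from $x_i$ to $x_j$ and the bisector of player $i$'s transmit beam when $i$ acts as transmitter, resp. of player $i$'s receive beam when $i$ acts as receiver. The channel gain from transmitter $m$ to receiver $d(n)$ is $g_{m,d(n)}=G\,r_{m,d(n)}^{-\alpha}\,\mathbf 1\{|\theta_{m,d(n)}|\le\theta_T/2\}\,\mathbf 1\{|\theta_{d(n),m}|\le\theta_R/2\}$ for $m\ne d(n)$ (angle of $m$ w.r.t. its transmit beam, angle of $d(n)$ w.r.t. its receive beam), and $g_{d(n),d(n)}=+\infty$. Player $n$ transmits with power $P_n\in(0,P_{\max}]$, $P_{\max}=P_0\left(\frac{\log N}{N}\right)^{\alpha/2}$ (the $P_n$ may depend on the locations). Game: each player chooses one channel $a_n\in\{1,\dots,K\}$; $\mathbf a=(a_1,\dots,a_N)$, $\mathbf a_{-n}$ is the profile of the others and $(k,\mathbf a_{-n})$ the profile where $n$ plays $k$. Interference: $I_n(\mathbf a)=\sum_{m\ne n:\,a_m=a_n}g_{m,d(n)}P_m$. Utility: $u_n(\mathbf a)=R_n(\mathbf a)=\log_2\!\big(1+\frac{g_{n,d(n)}P_n}{N_0+I_n(\mathbf a)}\big)$ (equal to $0$ if $I_n(\mathbf a)=\infty$). For $\varepsilon>0$, $B_\varepsilon(\mathbf a_{-n})=\{k:\ u_n(k,\mathbf a_{-n})+\varepsilon\ge\max_{k'}u_n(k',\mathbf a_{-n})\}$. A profile $\mathbf a$ is an $\varepsilon$-PNE if $a_n\in B_\varepsilon(\mathbf a_{-n})$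 for all $n$. All probabilities "over the random game" are with respect to the random locations, and limits are as $N\to\infty$ with all constants fixed. Bounded-SNR assumption: there is a constant $\sigma_{\max}$ (independent of $N$) such that $\sigma_n:=g_{n,d(n)}P_n/N_0\le\sigma_{\max}$ for all $n$. *)

theory Defs
  imports "HOL-Probability.Probability"
begin

text \<open>Locations live in the plane, modelled as real \<times> real. Players are 0..<N,
 channels are 0..<K.\<close>

text \<open>Unsigned angle (in [0,pi]) between a direction vector v and the bisector of a
 beam with orientation phi (the unit vector (cos phi, sin phi)).\<close>
definition beam_angle :: "real \<times> real \<Rightarrow> real \<Rightarrow> real" where
  "beam_angle v phi = arccos ((v \<bullet> (cos phi, sin phi)) / norm v)"

definition gain :: "real \<Rightarrow> real \<Rightarrow> real \<Rightarrow> real \<Rightarrow> (nat \<Rightarrow> real) \<Rightarrow> (nat \<Rightarrow> real)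
    \<Rightarrow> (nat \<Rightarrow> real \<times> real) \<Rightarrow> nat \<Rightarrow> nat \<Rightarrow> real" where
  "gain G \<alpha> \<theta>T \<theta>R phiT phiR x m j =
     G * dist (x m) (x j) powr (-\<alpha>)
       * (if beam_angle (x j - x m) (phiT m) \<le> \<theta>T / 2 then 1 else 0)
       * (if beam_angle (x m - x j) (phiR j) \<le> \<theta>R / 2 then 1 else 0)"

text \<open>Rate of player n under profile a. The interference is infinite exactly when the
 destination d n itself transmits on n's channel (gain g_{d n, d n} = +infinity); the
 rate is then 0.\<close>
definition rate :: "nat \<Rightarrow> real \<Rightarrow> (nat \<Rightarrow> nat) \<Rightarrow> (nat \<Rightarrow> nat \<Rightarrow> real) \<Rightarrow> (nat \<Rightarrow> real)
    \<Rightarrow> (nat \<Rightarrow> nat) \<Rightarrow> nat \<Rightarrow> real" where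
  "rate N N0 d g P a n =
     (if \<exists>m<N. m \<noteq> n \<and> a m = a n \<and> m = d n then 0
      else log 2 (1 + g n (d n) * P n /
             (N0 + (\<Sum>m\<in>{m. m < N \<and> m \<noteq> n \<and> a m = a n}. g m (d n) * P m))))"

definition best_resp :: "nat \<Rightarrow> ((nat \<Rightarrow> nat) \<Rightarrow> nat \<Rightarrow> real) \<Rightarrow> real
    \<Rightarrow> (nat \<Rightarrow> nat) \<Rightarrow> nat \<Rightarrow> nat set" where
  "best_resp K u eps a n =
     {k. k < K \<and> u (a(n := k)) n + eps \<ge> Max ((\<lambda>k'. u (a(n := k')) n) ` {..<K})}"

definition exp_delta :: "nat \<Rightarrow> nat \<Rightarrow> ((nat \<Rightarrow> nat) \<Rightarrow> nat \<Rightarrow> real) \<Rightarrow> real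
    \<Rightarrow> (nat \<Rightarrow> nat) \<Rightarrow> nat \<Rightarrow> real" where
  "exp_delta N K u eps a n =
     (let B = best_resp K u (eps / 2) a n in
      (\<Sum>k\<in>B. (u (a(n := k)) n - u a n)
              + (\<Sum>m\<in>{m. m < N \<and> m \<noteq> n \<and> a m = k}. u (a(n := k)) m - u a m))
      / real (card B))"

definition good_event :: "nat \<Rightarrow> nat \<Rightarrow> ((nat \<Rightarrow> nat) \<Rightarrow> nat \<Rightarrow> real) \<Rightarrow> real \<Rightarrow> bool" where
  "good_event N K u eps \<longleftrightarrow>
     (\<forall>a. (\<forall>m<N. a m < K) \<longrightarrow> (\<forall>n<N. a n \<notin> best_resp K u eps a n \<longrightarrow>
        exp_delta N K u eps a n > 0))"

end

theory Submission
  imports Defs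
begin

lemma log_ratio_le:
  fixes A s x :: real
  assumes "0 < A" "0 \<le> s" "0 \<le> x"
  shows "log 2 (1 + s / A) - log 2 (1 + s / (A + x)) \<le> log 2 (1 + x / A)"
proof -
  have p1: "0 < 1 + s / (A + x)" using assms by (simp add: add_pos_nonneg)
  have p2: "0 < 1 + s / A" using assms by (simp add: add_pos_nonneg)
  have "(1 + s / A) \<le> (1 + x / A) * (1 + s / (A + x))"
  proof -
    have "(1 + x / A) * (1 + s / (A + x)) = (A + x) / A * ((A + x + s) / (A + x))"
      using assms by (simp add: field_simps)
    also have "\<dots> = (A + x + s) / A" using assms by (simp add: divide_simps)
    also have "\<dots> \<ge> 1 + s / A" using assms by (simp add: field_simps)
    finally show ?thesis .
  qed
  hence "log 2 (1 + s / A) \<le> log 2 ((1 + x / A) * (1 + s / (A + x)))"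
    using p1 p2 by simp
  also have "\<dots> = log 2 (1 + x / A) + log 2 (1 + s / (A + x))"
  proof -
    have p3: "0 < 1 + x / A" using assms by (simp add: add_pos_nonneg)
    show ?thesis using p3 p1 by (simp add: log_mult)
  qed
  finally show ?thesis by simp
qed

lemma log2_1p_nonneg: fixes y :: real assumes "0 \<le> y" shows "0 \<le> log 2 (1 + y)"
  using assms by simp

lemma log2_1p_mono: fixes y z :: real assumes "0 \<le> y" "y \<le> z" shows "log 2 (1 + y) \<le> log 2 (1 + z)"
  using assms by simp

lemma log2_le_lin:
  fixes y :: real assumes "0 \<le> y" shows "log 2 (1 + y) \<le> y / ln 2"
proof -
  have "ln (1 + y) \<le> y" using assms by (simp add: ln_add_one_self_le_self)
  thus ?thesis by (simp add: log_def divide_right_mono)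
qed

lemma pow_div_fact_le_exp:
  fixes y :: real assumes "0 \<le> y" shows "y ^ t / fact t \<le> exp y"
proof -
  have s: "(\<lambda>n. y^n /\<^sub>R fact n) sums exp y" by (rule exp_converges)
  have "y ^ t / fact t \<le> (\<Sum>n. y^n /\<^sub>R fact n)"
    using s assms
    by (intro order.trans[OF _ sum_le_suminf[of _ "{t}"]]) (auto simp: sums_iff divide_inverse_commute)
  thus ?thesis using s by (simp add: sums_iff)
qed

lemma choose_le_pow_div_fact:
  "real (n choose k) \<le> real n ^ k / fact k"
proof (cases "k \<le> n")
  case True
  have "fact k * fact (n - k) * (n choose k) = fact n" using binomial_fact_lemma[OF True] .
  hence "fact k * (n choose k) = fact n div fact (n - k)"
    by (metis fact_nonzero nonzero_mult_div_cancel_right mult.commute mult.assoc)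
  also have "\<dots> \<le> n ^ k" using fact_div_fact_le_pow[OF True] .
  finally have "real (fact k * (n choose k)) \<le> real (n ^ k)" by linarith
  thus ?thesis by (simp add: field_simps)
next
  case False thus ?thesis by (simp add: binomial_eq_0)
qed

lemma rate_eq:
  assumes "d n < N" "d n \<noteq> n"
  shows "rate N N0 d g P a n = (if a (d n) = a n then 0 else
     log 2 (1 + g n (d n) * P n / (N0 + (\<Sum>m\<in>{m. m < N \<and> m \<noteq> n \<and> a m = a n}. g m (d n) * P m))))"
proof -
  have "(\<exists>m<N. m \<noteq> n \<and> a m = a n \<and> m = d n) \<longleftrightarrow> a (d n) = a n" using assms by auto
  thus ?thesis unfolding rate_def by simp
qed

lemma rate_bounds:
  assumes "d n < N" "d n \<noteq> n" "N0 > 0" "\<And>i j. 0 \<le> g i j" "\<And>m. m < N \<Longrightarrow> 0 < P m" "n < N"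
  shows "0 \<le> rate N N0 d g P a n \<and> rate N N0 d g P a n \<le> log 2 (1 + g n (d n) * P n / N0)"
proof -
  define I where "I = (\<Sum>m\<in>{m. m < N \<and> m \<noteq> n \<and> a m = a n}. g m (d n) * P m)"
  have I0: "0 \<le> I" unfolding I_def by (auto intro!: sum_nonneg mult_nonneg_nonneg assms(4) less_imp_le[OF assms(5)])
  have s0: "0 \<le> g n (d n) * P n" by (auto intro!: mult_nonneg_nonneg assms(4) less_imp_le[OF assms(5)] assms(6))
  have a: "0 \<le> log 2 (1 + g n (d n) * P n / (N0 + I))"
    using s0 I0 assms(3) by (intro log2_1p_nonneg divide_nonneg_nonneg) auto
  have b: "log 2 (1 + g n (d n) * P n / (N0 + I)) \<le> log 2 (1 + g n (d n) * P n / N0)"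
    using s0 I0 assms(3) by (intro log2_1p_mono divide_left_mono divide_nonneg_nonneg) (auto intro!: add_pos_nonneg mult_pos_pos)
  have c: "0 \<le> log 2 (1 + g n (d n) * P n / N0)" using s0 assms(3) by (intro log2_1p_nonneg divide_nonneg_nonneg) auto
  show ?thesis using a b c rate_eq[of d n N N0 g P a, OF assms(1,2)] unfolding I_def by auto
qed

lemma det_good:
  fixes N K T S :: nat and N0 eps smax cz :: real
    and d :: "nat \<Rightarrow> nat" and g :: "nat \<Rightarrow> nat \<Rightarrow> real" and P :: "nat \<Rightarrow> real"
    and near :: "nat \<Rightarrow> nat \<Rightarrow> bool"
  assumes N0: "N0 > 0" and eps: "eps > 0"
    and d: "\<And>n. n < N \<Longrightarrow> d n < N \<and> d n \<noteq> n"
    and S: "\<And>j. j < N \<Longrightarrow> card {m. m < N \<and> d m = j} \<le> S"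
    and g0: "\<And>i j. 0 \<le> g i j"
    and P0: "\<And>m. m < N \<Longrightarrow> 0 < P m"
    and sig: "\<And>m. m < N \<Longrightarrow> g m (d m) * P m / N0 \<le> smax"
    and nearT: "\<And>i. i < N \<Longrightarrow> card {j. j < N \<and> j \<noteq> i \<and> near i j} \<le> T"
    and far: "\<And>i j. i < N \<Longrightarrow> j < N \<Longrightarrow> i \<noteq> j \<Longrightarrow> \<not> near i j \<Longrightarrow>
                g i j * P i \<le> cz \<and> g j i * P j \<le> cz"
    and cz: "0 \<le> cz"
    and big: "real K - (1 + real T + real N * cz / ((2 powr (eps/2) - 1) * N0))
        > (2/eps) * (max 0 (log 2 (1 + smax)) * real S * (1 + real T) + real N * cz / (N0 * ln 2))"
  shows "good_event N K (rate N N0 d g P) eps"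
proof -
  define u where "u = rate N N0 d g P"
  define Rmax where "Rmax = max 0 (log 2 (1 + smax))"
  define \<tau> where "\<tau> = 2 powr (eps/2) - 1"
  have Rmax0: "0 \<le> Rmax" unfolding Rmax_def by simp
  have tau0: "\<tau> > 0" unfolding \<tau>_def using eps by simp
  have log_tau: "log 2 (1 + \<tau>) = eps / 2" unfolding \<tau>_def by simp
  have ub: "0 \<le> u b m \<and> u b m \<le> Rmax" if "m < N" for b m
  proof -
    have r: "0 \<le> u b m \<and> u b m \<le> log 2 (1 + g m (d m) * P m / N0)"
      unfolding u_def using rate_bounds[of d m N N0 g P b] d[OF that] N0 g0 P0 that by blast
    have "log 2 (1 + g m (d m) * P m / N0) \<le> log 2 (1 + smax)"
      using sig[OF that] N0 g0 P0[OF that]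
      by (intro log2_1p_mono divide_nonneg_nonneg mult_nonneg_nonneg) (auto intro: less_imp_le)
    thus ?thesis using r unfolding Rmax_def by auto
  qed
  have "\<forall>a. (\<forall>m<N. a m < K) \<longrightarrow> (\<forall>n<N. a n \<notin> best_resp K u eps a n \<longrightarrow>
        exp_delta N K u eps a n > 0)"
  proof (intro allI impI)
    fix a n assume aK: "\<forall>m<N. a m < K" and n: "n < N" and nB: "a n \<notin> best_resp K u eps a n"
    define IS where "IS k = {m. m < N \<and> m \<noteq> n \<and> a m = k}" for k
    define Ik where "Ik k = (\<Sum>m\<in>IS k. g m (d n) * P m)" for k
    define s where "s = g n (d n) * P n"
    define Rn where "Rn = log 2 (1 + s / N0)"
    have dn: "d n < N" "d n \<noteq> n" using d[OF n] by auto
    have finIS: "finite (IS k)" for k unfolding IS_def by auto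
    have s0: "0 \<le> s" unfolding s_def using g0 P0[OF n] by (auto intro: mult_nonneg_nonneg less_imp_le)
    have Ik0: "0 \<le> Ik k" for k unfolding Ik_def IS_def
      by (auto intro!: sum_nonneg mult_nonneg_nonneg g0 less_imp_le[OF P0])
    have r1: "u (a(n:=k)) n = (if a (d n) = k then 0 else log 2 (1 + s / (N0 + Ik k)))" for k
    proof -
      have "{m. m < N \<and> m \<noteq> n \<and> (a(n:=k)) m = (a(n:=k)) n} = IS k" unfolding IS_def by auto
      moreover have "(a(n:=k)) (d n) = a (d n)" using dn by simp
      ultimately show ?thesis unfolding u_def Ik_def s_def
        using rate_eq[of d n N N0 g P "a(n:=k)", OF dn] by simp
    qed
    have r2: "u (a(n:=k)) n \<le> Rn" for k
      unfolding u_def Rn_def s_def using rate_bounds[of d n N N0 g P "a(n:=k)"] dn N0 g0 P0 n by blast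
    have Kpos: "0 < K" using aK n by auto
    define Mx where "Mx = Max ((\<lambda>k'. u (a(n := k')) n) ` {..<K})"
    have MxR: "Mx \<le> Rn" unfolding Mx_def using Kpos r2 by (subst Max_le_iff) auto
    have aa: "a(n := a n) = a" by simp
    have an: "a n < K" using aK n by auto
    have nB': "u a n + eps < Mx" using nB an unfolding best_resp_def Mx_def by (auto simp: aa)
    define B where "B = best_resp K u (eps / 2) a n"
    have B_def': "B = {k. k < K \<and> u (a(n:=k)) n + eps/2 \<ge> Mx}" unfolding B_def best_resp_def Mx_def by simp
    have finB: "finite B" unfolding B_def' by auto
    have D1: "u (a(n:=k)) n - u a n > eps / 2" if "k \<in> B" for k
      using that nB' unfolding B_def' by auto
    define Gd where "Gd = {k. k < K \<and> k \<noteq> a (d n) \<and> Ik k < \<tau> * N0}"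
    have GdB: "Gd \<subseteq> B"
    proof
      fix k assume k: "k \<in> Gd"
      have "Rn - log 2 (1 + s / (N0 + Ik k)) \<le> log 2 (1 + Ik k / N0)"
        unfolding Rn_def using log_ratio_le[OF N0 s0 Ik0] .
      also have "\<dots> < log 2 (1 + \<tau>)"
        using k N0 Ik0[of k] tau0 unfolding Gd_def by (auto simp: divide_less_eq add_pos_nonneg)
      finally have "Rn - eps/2 < u (a(n:=k)) n" using r1[of k] k log_tau unfolding Gd_def by auto
      thus "k \<in> B" using k MxR unfolding B_def' Gd_def by auto
    qed
    define NS where "NS = {m. m < N \<and> m \<noteq> d n \<and> near (d n) m}"
    define H where "H = {k. k < K \<and> k \<noteq> a (d n) \<and> \<tau> * N0 \<le> Ik k \<and> (\<forall>m\<in>IS k. \<not> near (d n) m)}"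
    have NST: "card NS \<le> T" unfolding NS_def using nearT[OF dn(1)] by simp
    have compl: "{..<K} - Gd \<subseteq> insert (a (d n)) (a ` NS \<union> H)"
    proof
      fix k assume k: "k \<in> {..<K} - Gd"
      show "k \<in> insert (a (d n)) (a ` NS \<union> H)"
      proof (cases "k = a (d n)")
        case False
        hence ge: "\<tau> * N0 \<le> Ik k" using k unfolding Gd_def by auto
        show ?thesis
        proof (cases "\<exists>m\<in>IS k. near (d n) m")
          case True
          then obtain m where m: "m \<in> IS k" "near (d n) m" by auto
          have "m \<noteq> d n" using m False unfolding IS_def by auto
          hence "m \<in> NS" using m unfolding NS_def IS_def by auto
          moreover have "k = a m" using m unfolding IS_def by auto
          ultimately show ?thesis by auto
        next
          case False2: False
          thus ?thesis using k ge False unfolding H_def by auto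
        qed
      qed auto
    qed
    have disjIS: "IS k \<inter> IS k' = {}" if "k \<noteq> k'" for k k' using that unfolding IS_def by auto
    have finH: "finite H" unfolding H_def by auto
    have Hsum: "real (card H) * (\<tau> * N0) \<le> real N * cz"
    proof -
      have "real (card H) * (\<tau> * N0) = (\<Sum>k\<in>H. \<tau> * N0)" by simp
      also have "\<dots> \<le> (\<Sum>k\<in>H. Ik k)" by (intro sum_mono) (auto simp: H_def)
      also have "\<dots> = (\<Sum>m\<in>(\<Union>k\<in>H. IS k). g m (d n) * P m)"
        unfolding Ik_def using finH finIS disjIS by (subst sum.UNION_disjoint) auto
      also have "\<dots> \<le> (\<Sum>m\<in>(\<Union>k\<in>H. IS k). cz)"
      proof (intro sum_mono)
        fix m assume "m \<in> (\<Union>k\<in>H. IS k)"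
        then obtain k where k: "k \<in> H" "m \<in> IS k" by auto
        have "m \<noteq> d n" "\<not> near (d n) m" "m < N" using k unfolding H_def IS_def by auto
        thus "g m (d n) * P m \<le> cz" using far[OF dn(1), of m] by auto
      qed
      also have "\<dots> = real (card (\<Union>k\<in>H. IS k)) * cz" by simp
      also have "\<dots> \<le> real N * cz"
      proof -
        have "(\<Union>k\<in>H. IS k) \<subseteq> {..<N}" unfolding IS_def by auto
        hence "card (\<Union>k\<in>H. IS k) \<le> card {..<N}" by (intro card_mono) auto
        hence "card (\<Union>k\<in>H. IS k) \<le> N" by simp
        thus ?thesis using cz by (intro mult_right_mono) auto
      qed
      finally show ?thesis .
    qed
    have cardH: "real (card H) \<le> real N * cz / (\<tau> * N0)"
      using Hsum tau0 N0 by (simp add: le_divide_eq)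
    have "card ({..<K} - Gd) \<le> card (insert (a (d n)) (a ` NS \<union> H))"
      using compl finH by (intro card_mono) (auto simp: NS_def)
    also have "\<dots> \<le> 1 + (card (a ` NS) + card H)"
    proof -
      have fin: "finite (a ` NS \<union> H)" using finH by (auto simp: NS_def)
      have "card (insert (a (d n)) (a ` NS \<union> H)) \<le> Suc (card (a ` NS \<union> H))"
        using fin by (simp add: card_insert_if)
      thus ?thesis using card_Un_le[of "a ` NS" H] by simp
    qed
    also have "\<dots> \<le> 1 + (T + card H)" using card_image_le[of NS a] NST by (auto simp: NS_def)
    finally have cc: "card ({..<K} - Gd) \<le> 1 + T + card H" by simp
    have "card Gd + card ({..<K} - Gd) = K"
    proof -
      have "Gd \<subseteq> {..<K}" unfolding Gd_def by auto
      thus ?thesis using card_Diff_subset[of Gd "{..<K}"] card_mono[of "{..<K}" Gd] by (auto simp: Gd_def)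
    qed
    hence "real (card Gd) \<ge> real K - (1 + real T + real (card H))" using cc by linarith
    moreover have "card Gd \<le> card B" using GdB finB card_mono by blast
    ultimately have cardB: "real (card B) \<ge> real K - (1 + real T + real N * cz / (\<tau> * N0))"
      using cardH by linarith
    define b where "b m = (if d m = n \<or> near n (d m) then Rmax else cz / (N0 * ln 2))" for m
    define f where "f m = u (a(n := a m)) m - u a m" for m
    have b0: "0 \<le> b m" for m unfolding b_def using Rmax0 cz N0 by auto
    have fb: "f m \<ge> - b m" if m: "m < N" "m \<noteq> n" for m
    proof -
      have fR: "f m \<ge> - Rmax" unfolding f_def using ub[OF m(1), of "a(n := a m)"] ub[OF m(1), of a] by auto
      show ?thesis
      proof (cases "d m = n \<or> near n (d m)")
        case True thus ?thesis using fR unfolding b_def by auto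
      next
        case False
        hence dm: "d m \<noteq> n" "\<not> near n (d m)" by auto
        have dm2: "d m < N" "d m \<noteq> m" using d[OF m(1)] by auto
        have gc: "g n (d m) * P n \<le> cz" using far[OF n dm2(1)] dm by auto
        show ?thesis
        proof (cases "a n = a m")
          case True hence "a(n := a m) = a" by auto
          thus ?thesis unfolding f_def using b0[of m] by simp
        next
          case anm: False
          show ?thesis
          proof (cases "a (d m) = a m")
            case True
            have "u (a(n := a m)) m = 0" unfolding u_def using rate_eq[of d m N N0 g P "a(n := a m)", OF dm2] True dm m by simp
            moreover have "u a m = 0" unfolding u_def using rate_eq[of d m N N0 g P a, OF dm2] True by simp
            ultimately show ?thesis unfolding f_def using b0[of m] by simp
          next
            case False
            define I where "I = (\<Sum>m'\<in>{m'. m' < N \<and> m' \<noteq> m \<and> a m' = a m}. g m' (d m) * P m')"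
            define x where "x = g n (d m) * P n"
            define sm where "sm = g m (d m) * P m"
            have I0: "0 \<le> I" unfolding I_def by (auto intro!: sum_nonneg mult_nonneg_nonneg g0 less_imp_le[OF P0])
            have x0: "0 \<le> x" unfolding x_def using g0 P0[OF n] by (auto intro: mult_nonneg_nonneg less_imp_le)
            have sm0: "0 \<le> sm" unfolding sm_def using g0 P0[OF m(1)] by (auto intro: mult_nonneg_nonneg less_imp_le)
            have setq: "{m'. m' < N \<and> m' \<noteq> m \<and> (a(n := a m)) m' = (a(n := a m)) m}
                = insert n {m'. m' < N \<and> m' \<noteq> m \<and> a m' = a m}" using m n by auto
            have nnot: "n \<notin> {m'. m' < N \<and> m' \<noteq> m \<and> a m' = a m}" using anm by auto
            have Inew: "(\<Sum>m'\<in>{m'. m' < N \<and> m' \<noteq> m \<and> (a(n := a m)) m' = (a(n := a m)) m}. g m' (d m) * P m') = x + I"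
              unfolding setq I_def x_def using nnot
              by (subst sum.insert) (auto intro!: sum.cong)
            have ua': "u (a(n := a m)) m = log 2 (1 + sm / (N0 + I + x))"
              unfolding u_def using rate_eq[of d m N N0 g P "a(n := a m)", OF dm2] False dm m Inew
              by (simp add: sm_def add.commute add.left_commute)
            have ua: "u a m = log 2 (1 + sm / (N0 + I))"
              unfolding u_def using rate_eq[of d m N N0 g P a, OF dm2] False by (simp add: sm_def I_def)
            have "u a m - u (a(n := a m)) m \<le> log 2 (1 + x / (N0 + I))"
              unfolding ua ua' using log_ratio_le[of "N0 + I" sm x] N0 I0 sm0 x0 by simp
            also have "\<dots> \<le> log 2 (1 + x / N0)"
              using N0 I0 x0 by (intro log2_1p_mono divide_left_mono divide_nonneg_nonneg) (auto intro!: mult_pos_pos add_pos_nonneg)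
            also have "\<dots> \<le> (x / N0) / ln 2" using x0 N0 by (intro log2_le_lin) simp
            also have "\<dots> \<le> (cz / N0) / ln 2" using gc N0 unfolding x_def by (intro divide_right_mono) auto
            finally show ?thesis unfolding f_def b_def using dm by auto
          qed
        qed
      qed
    qed
    define V where "V = {m. m < N \<and> m \<noteq> n \<and> (d m = n \<or> near n (d m))}"
    define J where "J = insert n {j. j < N \<and> j \<noteq> n \<and> near n j}"
    have cardJ: "card J \<le> 1 + T"
    proof -
      have "card J \<le> Suc (card {j. j < N \<and> j \<noteq> n \<and> near n j})"
        unfolding J_def by (simp add: card_insert_if)
      thus ?thesis using nearT[OF n] by simp
    qed
    have VJ: "V \<subseteq> (\<Union>j\<in>J. {m. m < N \<and> d m = j})" unfolding V_def J_def using d by auto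
    have finJ: "finite J" unfolding J_def by auto
    have "card V \<le> card (\<Union>j\<in>J. {m. m < N \<and> d m = j})" by (rule card_mono[OF _ VJ]) (use finJ in auto)
    also have "\<dots> \<le> (\<Sum>j\<in>J. card {m. m < N \<and> d m = j})" by (rule card_UN_le[OF finJ])
    also have "\<dots> \<le> (\<Sum>j\<in>J. S)" using S n by (intro sum_mono) (auto simp: J_def)
    also have "\<dots> = card J * S" by simp
    also have "\<dots> \<le> (1 + T) * S" using cardJ by (rule mult_le_mono1)
    finally have "real (card V) \<le> real ((1 + T) * S)" by (simp only: of_nat_le_iff)
    hence cardV: "real (card V) \<le> real S * (1 + real T)" by (simp add: field_simps)
    have sumb: "(\<Sum>m\<in>{m. m < N \<and> m \<noteq> n}. b m) \<le> Rmax * real S * (1 + real T) + real N * cz / (N0 * ln 2)"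
    proof -
      have "(\<Sum>m\<in>{m. m < N \<and> m \<noteq> n}. b m) \<le> (\<Sum>m\<in>{m. m < N \<and> m \<noteq> n}. Rmax * indicator V m + cz / (N0 * ln 2))"
        using Rmax0 cz N0 by (intro sum_mono) (auto simp: b_def V_def indicator_def)
      also have "\<dots> = Rmax * real (card V) + real (card {m. m < N \<and> m \<noteq> n}) * (cz / (N0 * ln 2))"
      proof -
        have VS: "V \<subseteq> {m. m < N \<and> m \<noteq> n}" unfolding V_def by auto
        hence "(\<Sum>m\<in>{m. m < N \<and> m \<noteq> n}. indicator V m :: real) = real (card V)"
        proof -
          have "(\<Sum>m\<in>{m. m < N \<and> m \<noteq> n}. indicator V m :: real) = (\<Sum>m\<in>{m. m < N \<and> m \<noteq> n}. of_bool (m \<in> V))"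
            by (simp add: indicator_def)
          also have "\<dots> = real (card ({m. m < N \<and> m \<noteq> n} \<inter> {m. m \<in> V}))" by (rule sum_of_bool_eq) (rule finite_subset[of _ "{..<N}"], auto)
          also have "{m. m < N \<and> m \<noteq> n} \<inter> {m. m \<in> V} = V" using VS by blast
          finally show ?thesis .
        qed
        thus ?thesis by (simp add: sum.distrib sum_distrib_left[symmetric])
      qed
      also have "\<dots> \<le> Rmax * (real S * (1 + real T)) + real N * (cz / (N0 * ln 2))"
      proof (intro add_mono mult_left_mono mult_right_mono)
        have "card {m. m < N \<and> m \<noteq> n} \<le> N" by (rule order_trans[OF card_mono[of "{..<N}"]]) auto
        thus "real (card {m. m < N \<and> m \<noteq> n}) \<le> real N" by simp
      qed (use cardV Rmax0 cz N0 in auto)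
      finally show ?thesis by (simp add: field_simps)
    qed
    define L where "L = Rmax * real S * (1 + real T) + real N * cz / (N0 * ln 2)"
    have L0: "0 \<le> L" unfolding L_def using Rmax0 cz N0 by auto
    have bigB: "real (card B) > (2/eps) * L"
      using cardB big unfolding L_def Rmax_def \<tau>_def by linarith
    have "(2/eps) * L \<ge> 0" using L0 eps by simp
    hence "real (card B) > 0" using bigB by linarith
    hence Bpos: "card B > 0" by simp
    hence Bne: "B \<noteq> {}" by auto
    have D2: "(\<Sum>k\<in>B. (\<Sum>m\<in>{m. m < N \<and> m \<noteq> n \<and> a m = k}. u (a(n := k)) m - u a m)) \<ge> - L"
    proof -
      have "(\<Sum>k\<in>B. (\<Sum>m\<in>{m. m < N \<and> m \<noteq> n \<and> a m = k}. u (a(n := k)) m - u a m))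
          = (\<Sum>k\<in>B. (\<Sum>m\<in>IS k. f m))"
        unfolding IS_def f_def by (intro sum.cong refl) auto
      also have "\<dots> \<ge> (\<Sum>k\<in>B. (\<Sum>m\<in>IS k. - b m))"
        by (intro sum_mono) (auto simp: IS_def intro!: fb)
      finally have 1: "(\<Sum>k\<in>B. (\<Sum>m\<in>IS k. - b m)) \<le> (\<Sum>k\<in>B. (\<Sum>m\<in>{m. m < N \<and> m \<noteq> n \<and> a m = k}. u (a(n := k)) m - u a m))" .
      have "(\<Sum>k\<in>B. (\<Sum>m\<in>IS k. b m)) = (\<Sum>m\<in>(\<Union>k\<in>B. IS k). b m)"
        using finB finIS disjIS by (subst sum.UNION_disjoint) auto
      also have "\<dots> \<le> (\<Sum>m\<in>{m. m < N \<and> m \<noteq> n}. b m)"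
        using b0 by (intro sum_mono2) (auto simp: IS_def)
      also have "\<dots> \<le> L" unfolding L_def Rmax_def using sumb unfolding Rmax_def .
      finally have "(\<Sum>k\<in>B. (\<Sum>m\<in>IS k. - b m)) \<ge> - L" by (simp add: sum_negf)
      thus ?thesis using 1 by linarith
    qed
    have "(\<Sum>k\<in>B. u (a(n := k)) n - u a n) > (\<Sum>k\<in>B. eps / 2)"
      using finB Bne D1 by (intro sum_strict_mono) auto
    hence D1s: "(\<Sum>k\<in>B. u (a(n := k)) n - u a n) > real (card B) * (eps / 2)" by simp
    have "real (card B) * (eps/2) \<ge> L" using bigB eps by (simp add: field_simps)
    hence num: "(\<Sum>k\<in>B. (u (a(n := k)) n - u a n)
        + (\<Sum>m\<in>{m. m < N \<and> m \<noteq> n \<and> a m = k}. u (a(n := k)) m - u a m)) > 0"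
      using D1s D2 by (simp add: sum.distrib)
    show "exp_delta N K u eps a n > 0"
      unfolding exp_delta_def Let_def B_def[symmetric] using num Bpos by simp
  qed
  thus ?thesis unfolding good_event_def u_def .
qed

lemma lborel_cball_le:
  fixes y :: "real \<times> real" assumes "0 \<le> r"
  shows "emeasure lborel (cball y r) \<le> ennreal (4 * r\<^sup>2)"
proof -
  have sub: "cball y r \<subseteq> {fst y - r .. fst y + r} \<times> {snd y - r .. snd y + r}"
  proof
    fix z assume "z \<in> cball y r"
    hence d: "dist y z \<le> r" by simp
    have "dist (fst y) (fst z) \<le> dist y z" "dist (snd y) (snd z) \<le> dist y z"
      by (rule dist_fst_le, rule dist_snd_le)
    hence "dist (fst y) (fst z) \<le> r" "dist (snd y) (snd z) \<le> r" using d by linarith+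
    hence "fst z \<in> {fst y - r .. fst y + r}" "snd z \<in> {snd y - r .. snd y + r}"
      unfolding dist_real_def by auto
    thus "z \<in> {fst y - r .. fst y + r} \<times> {snd y - r .. snd y + r}" by (simp add: mem_Times_iff)
  qed
  have bs: "({fst y - r .. fst y + r} \<times> {snd y - r .. snd y + r} :: (real \<times> real) set) \<in> sets lborel"
    by (simp add: borel_closed closed_Times)
  have "emeasure lborel (cball y r) \<le> emeasure lborel ({fst y - r .. fst y + r} \<times> {snd y - r .. snd y + r})"
    by (rule emeasure_mono[OF sub bs])
  also have "\<dots> = emeasure (lborel \<Otimes>\<^sub>M lborel) ({fst y - r .. fst y + r} \<times> {snd y - r .. snd y + r})"
    by (simp only: lborel_prod)
  also have "\<dots> = emeasure lborel {fst y - r .. fst y + r} * emeasure lborel {snd y - r .. snd y + r}"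
    by (rule lborel.emeasure_pair_measure_Times) auto
  also have "\<dots> = ennreal (2 * r) * ennreal (2 * r)"
    using assms by simp
  also have "\<dots> = ennreal (4 * r\<^sup>2)" using assms by (simp add: ennreal_mult[symmetric] power2_eq_square)
  finally show ?thesis .
qed

lemma mu_cball_le:
  fixes y :: "real \<times> real" and D :: "(real \<times> real) set"
  assumes "0 \<le> r" "D \<in> sets lborel" "emeasure lborel D = ennreal (1 / lam)" "lam > 0"
  shows "emeasure (uniform_measure lborel D) (cball y r) \<le> ennreal (4 * lam * r\<^sup>2)"
proof -
  have Dc: "cball y r \<in> sets lborel" by (simp add: borel_closed)
  have "emeasure (uniform_measure lborel D) (cball y r) = emeasure lborel (D \<inter> cball y r) / emeasure lborel D"
    by (rule emeasure_uniform_measure[OF assms(2) Dc])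
  also have "\<dots> \<le> emeasure lborel (cball y r) / ennreal (1 / lam)"
    unfolding assms(3) by (intro divide_right_mono_ennreal emeasure_mono Int_lower2 Dc)
  also have "\<dots> \<le> ennreal (4 * r\<^sup>2) / ennreal (1 / lam)"
    by (intro divide_right_mono_ennreal lborel_cball_le assms(1))
  also have "\<dots> = ennreal (4 * r\<^sup>2 / (1 / lam))"
    using assms by (intro divide_ennreal) auto
  also have "4 * r\<^sup>2 / (1 / lam) = 4 * lam * r\<^sup>2" by simp
  finally show ?thesis .
qed

lemma near_set_sets:
  fixes M :: "(real \<times> real) measure"
  assumes "i \<in> I'" "U \<subseteq> I'" "finite U" "sets M = sets borel"
  shows "{x \<in> space (PiM I' (\<lambda>_. M)). \<forall>j\<in>U. dist (x i) (x j) \<le> r} \<in> sets (PiM I' (\<lambda>_. M))"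
proof -
  have eq: "{x \<in> space (PiM I' (\<lambda>_. M)). \<forall>j\<in>U. dist (x i) (x j) \<le> r}
     = space (PiM I' (\<lambda>_. M)) \<inter> (\<Inter>j\<in>U. {x \<in> space (PiM I' (\<lambda>_. M)). dist (x i) (x j) \<le> r})" by auto
  have comp: "(\<lambda>x. x k) \<in> borel_measurable (PiM I' (\<lambda>_. M))" if "k \<in> I'" for k
  proof -
    have "(\<lambda>x. x k) \<in> measurable (PiM I' (\<lambda>_. M)) M" by (rule measurable_component_singleton[OF that])
    thus ?thesis by (subst (asm) measurable_cong_sets[OF refl assms(4)])
  qed
  have jset: "{x \<in> space (PiM I' (\<lambda>_. M)). dist (x i) (x j) \<le> r} \<in> sets (PiM I' (\<lambda>_. M))" if "j \<in> U" for j
  proof -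
    have "(\<lambda>x. dist (x i) (x j)) \<in> borel_measurable (PiM I' (\<lambda>_. M))"
      by (rule borel_measurable_dist[OF comp[OF assms(1)] comp]) (use that assms(2) in blast)
    thus ?thesis by (simp add: borel_measurable_iff_le)
  qed
  show ?thesis
  proof (cases "U = {}")
    case True thus ?thesis by simp
  next
    case False
    have "(\<Inter>j\<in>U. {x \<in> space (PiM I' (\<lambda>_. M)). dist (x i) (x j) \<le> r}) \<in> sets (PiM I' (\<lambda>_. M))"
      by (rule sets.finite_INT[OF assms(3) False jset])
    thus ?thesis unfolding eq by (rule sets.Int[OF sets.top])
  qed
qed

lemma mu_facts:
  fixes D :: "(real \<times> real) set"
  assumes "D \<in> sets lborel" "emeasure lborel D = ennreal (1 / lam)" "lam > 0"
  shows "prob_space (uniform_measure lborel D)" "sets (uniform_measure lborel D) = sets borel"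
    "space (uniform_measure lborel D) = UNIV"
proof -
  show "prob_space (uniform_measure lborel D)"
    by (rule prob_space_uniform_measure) (use assms in auto)
  show "sets (uniform_measure lborel D) = sets borel" by simp
  show "space (uniform_measure lborel D) = UNIV" by simp
qed

lemma prob_near:
  fixes D :: "(real \<times> real) set" and I U :: "nat set"
  assumes D: "D \<in> sets lborel" "emeasure lborel D = ennreal (1 / lam)" "lam > 0"
    and r: "0 \<le> r" and I: "finite I" "i \<notin> I" "U \<subseteq> I"
  shows "emeasure (PiM (insert i I) (\<lambda>_. uniform_measure lborel D))
      {x \<in> space (PiM (insert i I) (\<lambda>_. uniform_measure lborel D)). \<forall>j\<in>U. dist (x i) (x j) \<le> r}
      \<le> ennreal ((4 * lam * r\<^sup>2) ^ card U)"
proof -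
  define \<mu> where "\<mu> = uniform_measure lborel D"
  note mf = mu_facts[OF D, folded \<mu>_def]
  interpret ps: prob_space \<mu> by (rule mf(1))
  interpret pp: product_sigma_finite "\<lambda>_. \<mu>"
    by unfold_locales
  define E where "E = {x \<in> space (PiM (insert i I) (\<lambda>_. \<mu>)). \<forall>j\<in>U. dist (x i) (x j) \<le> r}"
  have finU: "finite U" using I finite_subset by blast
  have Es: "E \<in> sets (PiM (insert i I) (\<lambda>_. \<mu>))" unfolding E_def
    by (rule near_set_sets) (use I finU mf in auto)
  define c where "c = (4 * lam * r\<^sup>2) ^ card U"
  have "emeasure (PiM (insert i I) (\<lambda>_. \<mu>)) E = (\<integral>\<^sup>+ x. indicator E x \<partial>PiM (insert i I) (\<lambda>_. \<mu>))"
    using Es by simp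
  also have "\<dots> = (\<integral>\<^sup>+ y. (\<integral>\<^sup>+ x. indicator E (x(i := y)) \<partial>PiM I (\<lambda>_. \<mu>)) \<partial>\<mu>)"
    by (rule pp.product_nn_integral_insert_rev) (use I Es in auto)
  also have "\<dots> \<le> (\<integral>\<^sup>+ y. ennreal c \<partial>\<mu>)"
  proof (rule nn_integral_mono)
    fix y :: "real \<times> real" assume "y \<in> space \<mu>"
    define C where "C j = (if j \<in> U then cball y r else UNIV)" for j
    have "(\<integral>\<^sup>+ x. indicator E (x(i := y)) \<partial>PiM I (\<lambda>_. \<mu>)) = (\<integral>\<^sup>+ x. indicator (PiE I C) x \<partial>PiM I (\<lambda>_. \<mu>))"
    proof (rule nn_integral_cong)
      fix x assume x: "x \<in> space (PiM I (\<lambda>_. \<mu>))"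
      hence xe: "x \<in> PiE I (\<lambda>_. UNIV)" using mf(3) by (simp add: space_PiM)
      have sp: "x(i := y) \<in> space (PiM (insert i I) (\<lambda>_. \<mu>))"
        using xe mf(3) by (auto simp: space_PiM PiE_def extensional_def)
      have "(x(i := y) \<in> E) \<longleftrightarrow> x \<in> PiE I C"
      proof -
        have "(x(i := y) \<in> E) \<longleftrightarrow> (\<forall>j\<in>U. dist y (x j) \<le> r)"
          unfolding E_def using sp I by auto
        also have "\<dots> \<longleftrightarrow> x \<in> PiE I C"
          using xe I unfolding C_def by (auto simp: PiE_def Pi_def dist_commute)
        finally show ?thesis .
      qed
      thus "indicator E (x(i := y)) = (indicator (PiE I C) x :: ennreal)" by (simp add: indicator_def)
    qed
    also have "\<dots> = emeasure (PiM I (\<lambda>_. \<mu>)) (PiE I C)"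
    proof -
      have "PiE I C \<in> sets (PiM I (\<lambda>_. \<mu>))"
        by (rule sets_PiM_I_finite) (use I mf in \<open>auto simp: C_def borel_closed\<close>)
      thus ?thesis by simp
    qed
    also have "\<dots> = (\<Prod>j\<in>I. emeasure \<mu> (C j))"
      by (rule pp.emeasure_PiM) (use I mf in \<open>auto simp: C_def borel_closed\<close>)
    also have "\<dots> = (\<Prod>j\<in>I. if j \<in> U then emeasure \<mu> (cball y r) else 1)"
    proof (rule prod.cong[OF refl])
      fix j show "emeasure \<mu> (C j) = (if j \<in> U then emeasure \<mu> (cball y r) else 1)"
        unfolding C_def using ps.emeasure_space_1 mf(3) by auto
    qed
    also have "\<dots> = emeasure \<mu> (cball y r) ^ card U"
    proof -
      have eqU: "{x \<in> I. x \<in> U} = U" using I(3) by blast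
      show ?thesis
        using prod.inter_filter[OF I(1), of "\<lambda>j. emeasure \<mu> (cball y r)" "\<lambda>j. j \<in> U"] eqU by simp
    qed
    also have "\<dots> \<le> ennreal (4 * lam * r\<^sup>2) ^ card U"
      by (intro power_mono) (auto simp: \<mu>_def intro!: mu_cball_le r D)
    also have "\<dots> = ennreal c" unfolding c_def using D r by (simp add: ennreal_power)
    finally show "(\<integral>\<^sup>+ x. indicator E (x(i := y)) \<partial>PiM I (\<lambda>_. \<mu>)) \<le> ennreal c" .
  qed
  also have "\<dots> = ennreal c" using ps.emeasure_space_1 by simp
  finally show ?thesis unfolding E_def c_def \<mu>_def .
qed

lemma bad_bound:
  fixes D :: "(real \<times> real) set" and N t :: nat and r lam :: real
  assumes D: "D \<in> sets lborel" "emeasure lborel D = ennreal (1 / lam)" "lam > 0" and r: "0 \<le> r"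
  shows "(\<Union>i\<in>{..<N}. \<Union>U\<in>{U. U \<subseteq> {..<N} - {i} \<and> card U = t}.
            {x \<in> space (PiM {..<N} (\<lambda>_. uniform_measure lborel D)). \<forall>j\<in>U. dist (x i) (x j) \<le> r})
          \<in> sets (PiM {..<N} (\<lambda>_. uniform_measure lborel D))"
    "measure (PiM {..<N} (\<lambda>_. uniform_measure lborel D))
       (\<Union>i\<in>{..<N}. \<Union>U\<in>{U. U \<subseteq> {..<N} - {i} \<and> card U = t}.
            {x \<in> space (PiM {..<N} (\<lambda>_. uniform_measure lborel D)). \<forall>j\<in>U. dist (x i) (x j) \<le> r})
     \<le> real N * (real N ^ t / fact t) * (4 * lam * r\<^sup>2) ^ t"
proof -
  define M where "M = PiM {..<N} (\<lambda>_. uniform_measure lborel D)"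
  define E where "E i U = {x \<in> space M. \<forall>j\<in>U. dist (x i) (x j) \<le> r}" for i U
  define Sub where "Sub i = {U. U \<subseteq> {..<N} - {i} \<and> card U = t}" for i
  note mf = mu_facts[OF D]
  interpret P: prob_space M unfolding M_def by (intro prob_space_PiM mf(1))
  have finSub: "finite (Sub i)" for i unfolding Sub_def by (rule finite_subset[of _ "Pow ({..<N})"]) auto
  have Es: "E i U \<in> sets M" if "i < N" "U \<in> Sub i" for i U
    unfolding E_def M_def by (rule near_set_sets) (use that mf in \<open>auto simp: Sub_def intro: finite_subset\<close>)
  have Em: "measure M (E i U) \<le> (4 * lam * r\<^sup>2) ^ t" if "i < N" "U \<in> Sub i" for i U
  proof -
    have ins: "insert i ({..<N} - {i}) = {..<N}" using that by auto
    have "emeasure M (E i U) \<le> ennreal ((4 * lam * r\<^sup>2) ^ card U)"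
      using prob_near[OF D r, of "{..<N} - {i}" i U] that unfolding E_def M_def ins Sub_def by auto
    hence "ennreal (measure M (E i U)) \<le> ennreal ((4 * lam * r\<^sup>2) ^ t)"
      using that unfolding Sub_def by (simp add: P.emeasure_eq_measure)
    thus ?thesis using D r by (subst (asm) ennreal_le_iff) auto
  qed
  have U1: "(\<Union>U\<in>Sub i. E i U) \<in> sets M" if "i < N" for i
    using Es[OF that] finSub by (intro sets.finite_UN) auto
  have B: "(\<Union>i\<in>{..<N}. \<Union>U\<in>Sub i. E i U) \<in> sets M"
    using U1 by (rule sets.finite_UN[rotated]) auto
  have cardSub: "real (card (Sub i)) \<le> real N ^ t / fact t" if "i < N" for i
  proof -
    have "card (Sub i) = card ({..<N} - {i}) choose t" unfolding Sub_def by (rule n_subsets) auto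
    also have "card ({..<N} - {i}) = N - 1" using that by simp
    finally have "real (card (Sub i)) \<le> real (N - 1) ^ t / fact t" using choose_le_pow_div_fact by simp
    also have "\<dots> \<le> real N ^ t / fact t" by (intro divide_right_mono power_mono) auto
    finally show ?thesis .
  qed
  have "measure M (\<Union>i\<in>{..<N}. \<Union>U\<in>Sub i. E i U) \<le> (\<Sum>i\<in>{..<N}. measure M (\<Union>U\<in>Sub i. E i U))"
    by (rule measure_UNION_le) (use U1 in auto)
  also have "\<dots> \<le> (\<Sum>i\<in>{..<N}. (\<Sum>U\<in>Sub i. measure M (E i U)))"
    by (intro sum_mono measure_UNION_le finSub) (use Es in auto)
  also have "\<dots> \<le> (\<Sum>i\<in>{..<N}. (\<Sum>U\<in>Sub i. (4 * lam * r\<^sup>2) ^ t))"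
    by (intro sum_mono) (use Em in auto)
  also have "\<dots> = (\<Sum>i\<in>{..<N}. real (card (Sub i)) * (4 * lam * r\<^sup>2) ^ t)" by simp
  also have "\<dots> \<le> (\<Sum>i\<in>{..<N}. (real N ^ t / fact t) * (4 * lam * r\<^sup>2) ^ t)"
    by (intro sum_mono mult_right_mono cardSub) (use D r in auto)
  also have "\<dots> = real N * (real N ^ t / fact t) * (4 * lam * r\<^sup>2) ^ t" by simp
  finally have meas: "measure M (\<Union>i\<in>{..<N}. \<Union>U\<in>Sub i. E i U) \<le> real N * (real N ^ t / fact t) * (4 * lam * r\<^sup>2) ^ t" .
  show "(\<Union>i\<in>{..<N}. \<Union>U\<in>{U. U \<subseteq> {..<N} - {i} \<and> card U = t}.
            {x \<in> space (PiM {..<N} (\<lambda>_. uniform_measure lborel D)). \<forall>j\<in>U. dist (x i) (x j) \<le> r})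
          \<in> sets (PiM {..<N} (\<lambda>_. uniform_measure lborel D))"
    using B unfolding E_def Sub_def M_def .
  show "measure (PiM {..<N} (\<lambda>_. uniform_measure lborel D))
       (\<Union>i\<in>{..<N}. \<Union>U\<in>{U. U \<subseteq> {..<N} - {i} \<and> card U = t}.
            {x \<in> space (PiM {..<N} (\<lambda>_. uniform_measure lborel D)). \<forall>j\<in>U. dist (x i) (x j) \<le> r})
     \<le> real N * (real N ^ t / fact t) * (4 * lam * r\<^sup>2) ^ t"
    using meas unfolding E_def Sub_def M_def .
qed

lemma prob_tail:
  fixes Nr p :: real and t :: nat
  assumes N: "2 \<le> Nr" and p: "0 \<le> p" and t1: "exp 2 * (Nr * p) \<le> real t" and t2: "2 * ln Nr \<le> real t"
  shows "Nr * (Nr ^ t / fact t) * p ^ t \<le> 1 / Nr"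
proof -
  have tpos: "0 < real t" using t2 N by (smt (verit) ln_gt_zero)
  have Np0: "0 \<le> Nr * p" using N p by simp
  have "Nr ^ t / fact t * p ^ t = (Nr * p) ^ t / fact t" by (simp add: power_mult_distrib)
  also have "\<dots> = (Nr * p / real t) ^ t * (real t ^ t / fact t)"
    using tpos by (simp add: power_divide)
  also have "\<dots> \<le> (exp (-2)) ^ t * exp (real t)"
  proof (intro mult_mono power_mono pow_div_fact_le_exp)
    show "Nr * p / real t \<le> exp (-2)"
      using t1 tpos by (simp add: divide_le_eq exp_minus field_simps)
  qed (use tpos Np0 in auto)
  also have "\<dots> = exp (- real t)"
    by (simp add: exp_of_nat_mult[symmetric] exp_add[symmetric])
  also have "\<dots> \<le> exp (- (2 * ln Nr))" using t2 by simp
  also have "\<dots> = 1 / Nr ^ 2"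
  proof -
    have e: "exp (real 2 * ln Nr) = exp (ln Nr) ^ 2" by (rule exp_of_nat_mult)
    have "exp (ln Nr) = Nr" using N by simp
    hence "exp (2 * ln Nr) = Nr ^ 2" using e by simp
    thus ?thesis by (simp add: exp_minus inverse_eq_divide)
  qed
  finally have "Nr ^ t / fact t * p ^ t \<le> 1 / Nr ^ 2" .
  hence "Nr * (Nr ^ t / fact t * p ^ t) \<le> Nr * (1 / Nr ^ 2)" using N by (intro mult_left_mono) auto
  also have "\<dots> = 1 / Nr" using N by (simp add: power2_eq_square)
  finally show ?thesis by (simp add: mult.assoc)
qed

lemma big_alg:
  fixes Kr q Np Nc lnn t Aa Ab Lt ee lam G Pz :: real
  assumes "Kr > 0" "q \<ge> 0" "Lt > 0" "Aa \<ge> 0" "Ab \<ge> 0" "ee \<ge> 0" "lam \<ge> 0"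
    and h1: "Np \<le> 4 * lam * (q * Kr)" and h2: "Nc \<le> G * Pz * (q * Kr)"
    and h3: "lnn \<le> q * Kr" and h4: "Lt \<le> q * Kr"
    and ht: "t \<le> ee * Np + 2 * lnn + 1"
    and hC: "(Aa * (2 / Lt + 4 * ee * lam + 2) + Ab * G * Pz) * q < 1"
  shows "Aa * (1 + t) + Ab * Nc < Kr"
proof -
  have two: "2 \<le> 2 / Lt * (q * Kr)" using h4 assms(3) by (simp add: field_simps)
  have e2Np: "ee * Np \<le> 4 * ee * lam * (q * Kr)" using h1 assms(6) mult_left_mono by fastforce
  have "1 + t \<le> (2 / Lt + 4 * ee * lam + 2) * (q * Kr)"
    using ht two e2Np h3 by (simp add: algebra_simps)
  hence a: "Aa * (1 + t) \<le> Aa * ((2 / Lt + 4 * ee * lam + 2) * (q * Kr))"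
    using assms(4) by (rule mult_left_mono)
  have b: "Ab * Nc \<le> Ab * (G * Pz * (q * Kr))" using h2 assms(5) by (rule mult_left_mono)
  have "Aa * (1 + t) + Ab * Nc \<le> ((Aa * (2 / Lt + 4 * ee * lam + 2) + Ab * G * Pz) * q) * Kr"
    using a b by (simp add: algebra_simps)
  also have "\<dots> < 1 * Kr" using hC assms(1) by (intro mult_strict_right_mono) auto
  finally show ?thesis by simp
qed

lemma gain_bounds:
  assumes "G > 0"
  shows "0 \<le> gain G \<alpha> \<theta>T \<theta>R phiT phiR x i j \<and> gain G \<alpha> \<theta>T \<theta>R phiT phiR x i j \<le> G * dist (x i) (x j) powr (-\<alpha>)"
  using assms unfolding gain_def by (auto simp: mult_nonneg_nonneg)

theorem lemma4:
  fixes lam \<alpha> G \<theta>T \<theta>R P0 N0 \<sigma>max \<epsilon> :: real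
    and S :: nat
    and D :: "(real \<times> real) set"
    and l :: "nat \<Rightarrow> real"
    and K :: "nat \<Rightarrow> nat"
    and d :: "nat \<Rightarrow> nat \<Rightarrow> nat"
    and phiT phiR :: "nat \<Rightarrow> nat \<Rightarrow> real"
    and P :: "nat \<Rightarrow> (nat \<Rightarrow> real \<times> real) \<Rightarrow> nat \<Rightarrow> real"
  assumes "lam > 0" "\<alpha> > 0" "G > 0" "P0 > 0" "N0 > 0" "S > 0" "\<epsilon> > 0"
    and "0 < \<theta>T" "\<theta>T \<le> 2 * pi" "0 < \<theta>R" "\<theta>R \<le> 2 * pi"
    and "closed D" "emeasure lborel D = ennreal (1 / lam)"
    and "\<And>N. N \<ge> 2 \<Longrightarrow> l N \<ge> 1 \<and> real (K N) = real N / l N"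
    and "(\<lambda>N. l N * (ln (real N) / real N) powr (\<alpha> / (\<alpha> + 2))) \<longlonglongrightarrow> 0"
    and "\<And>N n. N \<ge> 2 \<Longrightarrow> n < N \<Longrightarrow> d N n < N \<and> d N n \<noteq> n"
    and "\<And>N j. N \<ge> 2 \<Longrightarrow> j < N \<Longrightarrow> card {m. m < N \<and> d N m = j} \<le> S"
    and "\<And>N x n. N \<ge> 2 \<Longrightarrow> x \<in> PiE {..<N} (\<lambda>_. D) \<Longrightarrow> n < N \<Longrightarrow>
           0 < P N x n \<and> P N x n \<le> P0 * (ln (real N) / real N) powr (\<alpha> / 2)"
    and "\<And>N x n. N \<ge> 2 \<Longrightarrow> x \<in> PiE {..<N} (\<lambda>_. D) \<Longrightarrow> n < N \<Longrightarrow>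
           gain G \<alpha> \<theta>T \<theta>R (phiT N) (phiR N) x n (d N n) * P N x n / N0 \<le> \<sigma>max"
  shows "\<exists>A. (\<forall>N. A N \<in> sets (PiM {..<N} (\<lambda>_. uniform_measure lborel D))
              \<and> A N \<subseteq> {x \<in> PiE {..<N} (\<lambda>_. D).
                  good_event N (K N)
                    (rate N N0 (d N) (gain G \<alpha> \<theta>T \<theta>R (phiT N) (phiR N) x) (P N x)) \<epsilon>})
           \<and> (\<lambda>N. measure (PiM {..<N} (\<lambda>_. uniform_measure lborel D)) (A N)) \<longlonglongrightarrow> 1"
proof -
  define \<mu> where "\<mu> = uniform_measure lborel D"
  define MM where "MM N = PiM {..<N} (\<lambda>_. \<mu>)" for N :: nat
  have Dsets: "D \<in> sets lborel" using assms(12) by (simp add: borel_closed)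
  note mf = mu_facts[OF Dsets assms(13) assms(1), folded \<mu>_def]
  define a where "a = \<alpha> / (\<alpha> + 2)"
  define X where "X N = ln (real N) / real N" for N :: nat
  define r0 where "r0 N = X N powr (a / 2)" for N :: nat
  define Pm where "Pm N = P0 * X N powr (\<alpha> / 2)" for N :: nat
  define c0 where "c0 N = G * r0 N powr (- \<alpha>) * Pm N" for N :: nat
  define p where "p N = 4 * lam * (r0 N)\<^sup>2" for N :: nat
  define t where "t N = nat \<lceil>exp 2 * (real N * p N) + 2 * ln (real N)\<rceil>" for N :: nat
  define q where "q N = l N * X N powr a" for N :: nat
  define \<tau> where "\<tau> = 2 powr (\<epsilon> / 2) - 1"
  define Rmax where "Rmax = max 0 (log 2 (1 + \<sigma>max))"
  define A1 where "A1 = 1 + (2 / \<epsilon>) * Rmax * real S"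
  define A3 where "A3 = 1 / (\<tau> * N0) + (2 / \<epsilon>) / (N0 * ln 2)"
  define C where "C = A1 * (2 / ln 2 + 4 * exp 2 * lam + 2) + A3 * G * P0"
  define Bad where "Bad N = (\<Union>i\<in>{..<N}. \<Union>U\<in>{U. U \<subseteq> {..<N} - {i} \<and> card U = t N}.
            {x \<in> space (MM N). \<forall>j\<in>U. dist (x i) (x j) \<le> r0 N})" for N :: nat
  define gd where "gd N \<longleftrightarrow> 2 \<le> N \<and> C * q N < 1" for N :: nat
  define A where "A N = (if gd N then PiE {..<N} (\<lambda>_. D) - Bad N else {})" for N :: nat
  have tau0: "\<tau> > 0" unfolding \<tau>_def using assms(7) by simp
  have Rmax0: "Rmax \<ge> 0" unfolding Rmax_def by simp
  have A1pos: "A1 \<ge> 0" unfolding A1_def using Rmax0 assms(7) by simp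
  have A3pos: "A3 \<ge> 0" unfolding A3_def using tau0 assms(5,7) by simp
  have C0: "C \<ge> 0" unfolding C_def using A1pos A3pos assms(1,3,4) by simp
  have qlim: "q \<longlonglongrightarrow> 0" using assms(15) unfolding q_def X_def a_def .
  have ev: "eventually gd sequentially"
  proof -
    have "(\<lambda>N. C * q N) \<longlonglongrightarrow> C * 0" by (intro tendsto_mult tendsto_const qlim)
    hence "eventually (\<lambda>N. C * q N < 1) sequentially" by (intro order_tendstoD) auto
    moreover have "eventually (\<lambda>N. 2 \<le> N) sequentially" by (rule eventually_ge_at_top)
    ultimately show ?thesis unfolding gd_def by eventually_elim auto
  qed
  have spaceMM: "space (MM N) = PiE {..<N} (\<lambda>_. UNIV)" for N :: nat
    unfolding MM_def using mf(3) by (simp add: space_PiM)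
  have numf: "0 < X N \<and> X N \<le> 1 \<and> 0 < r0 N \<and> 0 < real (K N) \<and>
      real N * p N = 4 * lam * (q N * real (K N)) \<and>
      real N * c0 N = G * P0 * (q N * real (K N)) \<and>
      ln (real N) \<le> q N * real (K N) \<and> ln 2 \<le> q N * real (K N)" if N: "2 \<le> N" for N :: nat
  proof -
    have lnpos: "0 < ln (real N)" using N by simp
    have lnle: "ln (real N) \<le> real N" using ln_le_minus_one[of "real N"] N by simp
    have Xp: "0 < X N" unfolding X_def using lnpos N by simp
    have X1: "X N \<le> 1" unfolding X_def using lnle N by simp
    have l1: "l N \<ge> 1" and KN: "real (K N) = real N / l N" using assms(14)[OF N] by auto
    have Kp: "0 < real (K N)" using KN l1 N by simp
    have a01: "0 < a" "a \<le> 1" unfolding a_def using assms(2) by auto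
    have qK: "q N * real (K N) = real N * X N powr a" unfolding q_def KN using l1 by simp
    have r0sq: "(r0 N)\<^sup>2 = X N powr a"
      unfolding r0_def power2_eq_square by (simp add: powr_add[symmetric])
    have F1: "real N * p N = 4 * lam * (q N * real (K N))" unfolding qK p_def r0sq by simp
    have ex: "a / 2 * (- \<alpha>) + \<alpha> / 2 = a" unfolding a_def using assms(2) by (simp add: field_simps)
    have "r0 N powr (- \<alpha>) * X N powr (\<alpha> / 2) = X N powr (a / 2 * (- \<alpha>)) * X N powr (\<alpha> / 2)"
      unfolding r0_def powr_powr by (rule refl)
    also have "\<dots> = X N powr (a / 2 * (- \<alpha>) + \<alpha> / 2)" by (simp only: powr_add)
    also have "\<dots> = X N powr a" by (simp only: ex)
    finally have "r0 N powr (- \<alpha>) * X N powr (\<alpha> / 2) = X N powr a" .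
    hence F2: "real N * c0 N = G * P0 * (q N * real (K N))" unfolding qK c0_def Pm_def
      by (simp add: algebra_simps)
    have "ln (real N) = real N * X N" unfolding X_def using N by simp
    also have "\<dots> = real N * X N powr 1" using Xp by simp
    also have "\<dots> \<le> real N * X N powr a" using powr_mono'[OF a01(2), of "X N"] Xp X1 by (intro mult_left_mono) auto
    finally have F3: "ln (real N) \<le> q N * real (K N)" unfolding qK .
    have "ln 2 \<le> ln (real N)" using N by simp
    hence F4: "ln 2 \<le> q N * real (K N)" using F3 by linarith
    have "0 < r0 N" unfolding r0_def using Xp by simp
    thus ?thesis using Xp X1 Kp F1 F2 F3 F4 by auto
  qed
  have tb: "exp 2 * (real N * p N) \<le> real (t N) \<and> 2 * ln (real N) \<le> real (t N) \<and>
      real (t N) \<le> exp 2 * (real N * p N) + 2 * ln (real N) + 1" if N: "2 \<le> N" for N :: nat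
  proof -
    have p0: "0 \<le> p N" unfolding p_def using assms(1) by simp
    have l0: "0 \<le> ln (real N)" using N by simp
    define y where "y = exp 2 * (real N * p N) + 2 * ln (real N)"
    have y0: "0 \<le> y" unfolding y_def using p0 l0 by simp
    have "real (t N) = of_int \<lceil>y\<rceil>" unfolding t_def y_def[symmetric] using y0 by simp
    moreover have "y \<le> of_int \<lceil>y\<rceil>" "of_int \<lceil>y\<rceil> \<le> y + 1" by linarith+
    moreover have "0 \<le> exp 2 * (real N * p N)" using p0 by simp
    ultimately show ?thesis using l0 unfolding y_def by linarith
  qed
  have PiEs: "PiE {..<N} (\<lambda>_. D) \<in> sets (MM N)" for N :: nat
    unfolding MM_def by (rule sets_PiM_I_finite) (use Dsets mf in auto)
  have BadS: "Bad N \<in> sets (MM N)" if "2 \<le> N" for N :: nat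
  proof -
    have "0 \<le> r0 N" using numf[OF that] by simp
    thus ?thesis using bad_bound(1)[OF Dsets assms(13) assms(1), of "r0 N" N "t N"]
      unfolding Bad_def MM_def \<mu>_def by simp
  qed
  have As: "A N \<in> sets (MM N)" for N :: nat
    unfolding A_def gd_def using PiEs BadS by auto
  have Asub: "A N \<subseteq> {x \<in> PiE {..<N} (\<lambda>_. D).
                  good_event N (K N) (rate N N0 (d N) (gain G \<alpha> \<theta>T \<theta>R (phiT N) (phiR N) x) (P N x)) \<epsilon>}" for N :: nat
  proof
    fix x assume xA: "x \<in> A N"
    hence g: "gd N" unfolding A_def by (auto split: if_splits)
    hence N: "2 \<le> N" unfolding gd_def by simp
    have xD: "x \<in> PiE {..<N} (\<lambda>_. D)" and xB: "x \<notin> Bad N" using xA g unfolding A_def by auto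
    have xsp: "x \<in> space (MM N)" using xD unfolding spaceMM by (auto simp: PiE_def Pi_def)
    note nf = numf[OF N]
    have c00: "0 \<le> c0 N" unfolding c0_def Pm_def using assms(3,4) by simp
    have nearT: "card {j. j < N \<and> j \<noteq> i \<and> dist (x i) (x j) \<le> r0 N} \<le> t N" if i: "i < N" for i
    proof (rule ccontr)
      assume "\<not> ?thesis"
      hence "t N \<le> card {j. j < N \<and> j \<noteq> i \<and> dist (x i) (x j) \<le> r0 N}" by simp
      then obtain U where U: "U \<subseteq> {j. j < N \<and> j \<noteq> i \<and> dist (x i) (x j) \<le> r0 N}" "card U = t N"
        by (rule obtain_subset_with_card_n)
      have "x \<in> Bad N" unfolding Bad_def
        using i U xsp by (intro UN_I[of i]) (auto intro!: UN_I[of U])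
      thus False using xB by simp
    qed
    have farb: "gain G \<alpha> \<theta>T \<theta>R (phiT N) (phiR N) x i j * P N x i \<le> c0 N"
      if ij: "i < N" "j < N" "\<not> dist (x i) (x j) \<le> r0 N" for i j
    proof -
      have gb: "0 \<le> gain G \<alpha> \<theta>T \<theta>R (phiT N) (phiR N) x i j"
        "gain G \<alpha> \<theta>T \<theta>R (phiT N) (phiR N) x i j \<le> G * dist (x i) (x j) powr (-\<alpha>)"
        using gain_bounds[OF assms(3)] by auto
      have "dist (x i) (x j) powr (-\<alpha>) \<le> r0 N powr (-\<alpha>)"
        using ij nf assms(2) by (intro powr_mono2') auto
      hence "G * dist (x i) (x j) powr (-\<alpha>) \<le> G * r0 N powr (-\<alpha>)"
        using assms(3) by (intro mult_left_mono) auto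
      hence g2: "gain G \<alpha> \<theta>T \<theta>R (phiT N) (phiR N) x i j \<le> G * r0 N powr (-\<alpha>)"
        using gb(2) by linarith
      have Pb: "0 < P N x i" "P N x i \<le> Pm N" using assms(18)[OF N xD ij(1)] unfolding Pm_def X_def by auto
      have "gain G \<alpha> \<theta>T \<theta>R (phiT N) (phiR N) x i j * P N x i \<le> (G * r0 N powr (-\<alpha>)) * Pm N"
        using g2 Pb gb by (intro mult_mono) auto
      thus ?thesis unfolding c0_def by simp
    qed
    have big: "real (K N) - (1 + real (t N) + real N * c0 N / ((2 powr (\<epsilon>/2) - 1) * N0))
        > (2/\<epsilon>) * (max 0 (log 2 (1 + \<sigma>max)) * real S * (1 + real (t N)) + real N * c0 N / (N0 * ln 2))"
    proof -
      have "A1 * (1 + real (t N)) + A3 * (real N * c0 N) < real (K N)"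
      proof (rule big_alg[where Kr="real (K N)" and q="q N" and Lt="ln 2" and ee="exp 2" and lam=lam
          and Np="real N * p N" and Nc="real N * c0 N" and lnn="ln (real N)" and G=G and Pz=P0])
        have qpos: "0 \<le> q N" unfolding q_def using assms(14)[OF N] by simp
        show "0 \<le> q N" by (rule qpos)
        show "(A1 * (2 / ln 2 + 4 * exp 2 * lam + 2) + A3 * G * P0) * q N < 1"
          using g unfolding gd_def C_def by simp
      qed (use nf tb[OF N] A1pos A3pos assms(1) in auto)
      moreover have "A1 * (1 + real (t N)) + A3 * (real N * c0 N)
          = (1 + real (t N) + real N * c0 N / (\<tau> * N0))
            + (2/\<epsilon>) * (Rmax * real S * (1 + real (t N)) + real N * c0 N / (N0 * ln 2))"
        unfolding A1_def A3_def by (simp add: algebra_simps add_divide_distrib)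
      ultimately show ?thesis unfolding \<tau>_def Rmax_def by linarith
    qed
    have "good_event N (K N) (rate N N0 (d N) (gain G \<alpha> \<theta>T \<theta>R (phiT N) (phiR N) x) (P N x)) \<epsilon>"
    proof (rule det_good[where T = "t N" and S = S and smax = \<sigma>max and cz = "c0 N"
          and near = "\<lambda>i j. dist (x i) (x j) \<le> r0 N"])
      show "N0 > 0" "\<epsilon> > 0" by (fact assms(5), fact assms(7))
      show "\<And>n. n < N \<Longrightarrow> d N n < N \<and> d N n \<noteq> n" using assms(16)[OF N] by blast
      show "\<And>j. j < N \<Longrightarrow> card {m. m < N \<and> d N m = j} \<le> S" using assms(17)[OF N] by blast
      show "\<And>i j. 0 \<le> gain G \<alpha> \<theta>T \<theta>R (phiT N) (phiR N) x i j" using gain_bounds[OF assms(3)] by blast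
      show "\<And>m. m < N \<Longrightarrow> 0 < P N x m" using assms(18)[OF N xD] by blast
      show "\<And>m. m < N \<Longrightarrow> gain G \<alpha> \<theta>T \<theta>R (phiT N) (phiR N) x m (d N m) * P N x m / N0 \<le> \<sigma>max"
        using assms(19)[OF N xD] by blast
      show "\<And>i. i < N \<Longrightarrow> card {j. j < N \<and> j \<noteq> i \<and> dist (x i) (x j) \<le> r0 N} \<le> t N" by (rule nearT)
      show "\<And>i j. i < N \<Longrightarrow> j < N \<Longrightarrow> i \<noteq> j \<Longrightarrow> \<not> dist (x i) (x j) \<le> r0 N \<Longrightarrow>
          gain G \<alpha> \<theta>T \<theta>R (phiT N) (phiR N) x i j * P N x i \<le> c0 N \<and>
          gain G \<alpha> \<theta>T \<theta>R (phiT N) (phiR N) x j i * P N x j \<le> c0 N"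
        using farb by (auto simp: dist_commute)
      show "0 \<le> c0 N" by (rule c00)
      show "real (K N) - (1 + real (t N) + real N * c0 N / ((2 powr (\<epsilon>/2) - 1) * N0))
        > (2/\<epsilon>) * (max 0 (log 2 (1 + \<sigma>max)) * real S * (1 + real (t N)) + real N * c0 N / (N0 * ln 2))"
        by (rule big)
    qed
    thus "x \<in> {x \<in> PiE {..<N} (\<lambda>_. D).
                  good_event N (K N) (rate N N0 (d N) (gain G \<alpha> \<theta>T \<theta>R (phiT N) (phiR N) x) (P N x)) \<epsilon>}"
      using xD by simp
  qed
  have probMM: "prob_space (MM N)" for N :: nat unfolding MM_def by (intro prob_space_PiM mf(1))
  have mle1: "measure (MM N) (A N) \<le> 1" for N :: nat
    using prob_space.prob_le_1[OF probMM] .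
  have mge: "1 - 1 / real N \<le> measure (MM N) (A N)" if g: "gd N" for N :: nat
  proof -
    interpret P: prob_space "MM N" by (rule probMM)
    interpret ps: prob_space \<mu> by (rule mf(1))
    interpret pp: product_sigma_finite "\<lambda>_. \<mu>" by unfold_locales
    have N: "2 \<le> N" using g unfolding gd_def by simp
    note nf = numf[OF N]
    have "emeasure (MM N) (PiE {..<N} (\<lambda>_. D)) = (\<Prod>i\<in>{..<N}. emeasure \<mu> D)"
      unfolding MM_def by (rule pp.emeasure_PiM) (use Dsets mf in auto)
    also have "\<dots> = 1" using emeasure_uniform_measure_1[of lborel D] assms(1,13) unfolding \<mu>_def by simp
    finally have m1: "measure (MM N) (PiE {..<N} (\<lambda>_. D)) = 1" by (simp add: P.emeasure_eq_measure)
    have mb: "measure (MM N) (Bad N) \<le> real N * (real N ^ t N / fact (t N)) * (p N) ^ t N"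
      using bad_bound(2)[OF Dsets assms(13) assms(1), of "r0 N" N "t N"] nf
      unfolding Bad_def MM_def \<mu>_def p_def by simp
    also have "\<dots> \<le> 1 / real N"
      by (rule prob_tail) (use N tb[OF N] assms(1) in \<open>auto simp: p_def\<close>)
    finally have mb': "measure (MM N) (Bad N) \<le> 1 / real N" .
    have e1: "measure (MM N) (A N) = measure (MM N) (PiE {..<N} (\<lambda>_. D)) - measure (MM N) (PiE {..<N} (\<lambda>_. D) \<inter> Bad N)"
      unfolding A_def using g by (simp add: P.finite_measure_Diff' PiEs BadS[OF N])
    have e2: "measure (MM N) (PiE {..<N} (\<lambda>_. D) \<inter> Bad N) \<le> measure (MM N) (Bad N)"
      by (intro P.finite_measure_mono) (use BadS[OF N] in auto)
    show ?thesis using e1 e2 m1 mb' by linarith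
  qed
  have lim: "(\<lambda>N. measure (MM N) (A N)) \<longlonglongrightarrow> 1"
  proof (rule tendsto_sandwich[of "\<lambda>N. 1 - 1 / real N" _ _ "\<lambda>N. 1"])
    show "eventually (\<lambda>N. 1 - 1 / real N \<le> measure (MM N) (A N)) sequentially"
      using ev by eventually_elim (rule mge)
    show "eventually (\<lambda>N. measure (MM N) (A N) \<le> 1) sequentially" using mle1 by simp
    show "(\<lambda>N. 1 - 1 / real N) \<longlonglongrightarrow> 1"
      using tendsto_diff[OF tendsto_const lim_1_over_n, of "1::real"] by simp
  qed simp
  show ?thesis
    by (rule exI[of _ A]) (use As Asub lim in \<open>simp add: MM_def \<mu>_def\<close>)
qed

end
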